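(* Let $n\ge 2$, $m\ge 1$, and let $T_{ij}\in\mathbb R^{m\times m}$ ($i,j\in\{1,\dots,n\}$) be similarity matrices with $T_{ij}=T_{ji}^\top$. Suppose that for every pair $i,j$ the maximization $\max_{P\in\mathcal P_m}\operatorname{tr}(P^\top T_{ij})$ has a unique maximizer $P_{ij}\in\mathcal P_m$, and that these maximizers are consistent: $P_{ij}P_{jk}=P_{ik}$ for all $i,j,k\in\{1,\dots,n\}$. Then Algorithm 1 (run with any Maximum Spanning Tree, any processing order of its edges, any initial permutation matrices, and any sequence of coordinate updates) outputs permutation matrices $A_1,\dots,A_n$ that attain the maximum in $$\max_{A_1,\dots,A_n\in\mathcal P_m}\ \mathcal L(A_1,\dots,A_n):=\sum_{i=1}^n\sum_{j=1}^n\operatorname{tr}(A_iT_{ij}A_j^\top).$$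
   Context: $\mathcal P_m$ denotes the set of $m\times m$ permutation matrices. Define $f(T_{ij}):=\max_{P\in\mathcal P_m}\operatorname{tr}(P^\top T_{ij})$. Algorithm 1 (input: $T_{ij}$ for $i,j\in\{1,\dots,n\}$): (1) Form the complete undirected graph $G$ on vertices $v_1,\dots,v_n$ where edge $(v_i,v_j)$, $i\ne j$, has weight $f(T_{ij})$, and compute a Maximum Spanning Tree with edge set $E'$. (2) Set $S_i\leftarrow\{v_i\}$ for each $i$ and initialize each $A_i$ to an arbitrary element of $\mathcal P_m$. (3) For each edge $(v_i,v_j)\in E'$ (in some order): compute $\hat P=\arg\max_{P\in\mathcal P_m}\operatorname{tr}(P^\top A_iT_{ij}A_j^\top)$; set $A_{j'}\leftarrow \hat P A_{j'}$ for every $v_{j'}\in S_j$; let $S'=S_i\cup S_j$ and set $S_k\leftarrow S'$ for every $v_k\in S'$. (4) Coordinate updates: repeatedly pick $i\in\{1,\dots,n\}$ and replace $A_i$ by a maximizer $\arg\max_{A\in\mathcal P_m}\operatorname{tr}\big(A^\top\sum_{j\ne i}A_jT_{ij}\big)$, until convergence. *)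

theory Defs
  imports "HOL-Analysis.Analysis"
begin

text \<open>Matrices are real m x m matrices indexed by a finite type 'm (so m >= 1).
  Vertices are the naturals 1..n.\<close>

type_synonym 'm mat = "real^'m^'m"

definition perm_mats :: "'m::finite mat set" where
  "perm_mats = {(\<chi> r c. if c = p r then 1 else 0) | p. p permutes (UNIV :: 'm set)}"

definition tr :: "'m::finite mat \<Rightarrow> real" where
  "tr A = trace A"

definition argmax_perm :: "('m::finite mat \<Rightarrow> real) \<Rightarrow> 'm mat set" where
  "argmax_perm F = {P \<in> perm_mats. \<forall>Q\<in>perm_mats. F Q \<le> F P}"

definition fval :: "'m::finite mat \<Rightarrow> real" where
  "fval T = Max ((\<lambda>P. tr (transpose P ** T)) ` perm_mats)"

definition Lobj :: "nat \<Rightarrow> (nat \<Rightarrow> nat \<Rightarrow> 'm::finite mat) \<Rightarrow> (nat \<Rightarrow> 'm mat) \<Rightarrow> real" where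
  "Lobj n T A = (\<Sum>i=1..n. \<Sum>j=1..n. tr (A i ** T i j ** transpose (A j)))"

definition complete_edges :: "nat \<Rightarrow> (nat \<times> nat) set" where
  "complete_edges n = {(i,j). 1 \<le> i \<and> i < j \<and> j \<le> n}"

definition sym_edges :: "(nat \<times> nat) set \<Rightarrow> (nat \<times> nat) set" where
  "sym_edges E = E \<union> E\<inverse>"

text \<open>Spanning tree of the complete graph: connected and acyclic (every edge is a bridge).\<close>
definition spanning_tree :: "nat \<Rightarrow> (nat \<times> nat) set \<Rightarrow> bool" where
  "spanning_tree n E \<longleftrightarrow> E \<subseteq> complete_edges n
     \<and> (\<forall>u\<in>{1..n}. \<forall>v\<in>{1..n}. (u,v) \<in> (sym_edges E)\<^sup>*)
     \<and> (\<forall>e\<in>E. e \<notin> (sym_edges (E - {e}))\<^sup>*)"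

definition max_spanning_tree :: "nat \<Rightarrow> (nat \<Rightarrow> nat \<Rightarrow> 'm::finite mat) \<Rightarrow> (nat \<times> nat) set \<Rightarrow> bool" where
  "max_spanning_tree n T E \<longleftrightarrow> spanning_tree n E \<and>
     (\<forall>E'. spanning_tree n E' \<longrightarrow>
        (\<Sum>(i,j)\<in>E'. fval (T i j)) \<le> (\<Sum>(i,j)\<in>E. fval (T i j)))"

definition norm_edge :: "nat \<times> nat \<Rightarrow> nat \<times> nat" where
  "norm_edge e = (if fst e < snd e then e else (snd e, fst e))"

text \<open>An ordering of the tree's edges, each edge (v_i,v_j) given with an arbitrary orientation.\<close>
definition edge_order :: "(nat \<times> nat) set \<Rightarrow> (nat \<times> nat) list \<Rightarrow> bool" where
  "edge_order E es \<longleftrightarrow> distinct (map norm_edge es) \<and> set (map norm_edge es) = E"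

text \<open>One step of stage (3) of Algorithm 1 on edge (i,j); state = (A, S).\<close>
definition merge_step ::
  "(nat \<Rightarrow> nat \<Rightarrow> 'm::finite mat) \<Rightarrow> nat \<times> nat \<Rightarrow>
   (nat \<Rightarrow> 'm mat) \<times> (nat \<Rightarrow> nat set) \<Rightarrow> (nat \<Rightarrow> 'm mat) \<times> (nat \<Rightarrow> nat set) \<Rightarrow> bool" where
  "merge_step T e st st' \<longleftrightarrow>
     (case e of (i,j) \<Rightarrow> case st of (A,S) \<Rightarrow>
       (\<exists>Ph \<in> argmax_perm (\<lambda>P. tr (transpose P ** (A i ** T i j ** transpose (A j)))).
          st' = ((\<lambda>k. if k \<in> S j then Ph ** A k else A k),
                 (\<lambda>k. if k \<in> S i \<union> S j then S i \<union> S j else S k))))"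

inductive merge_run ::
  "(nat \<Rightarrow> nat \<Rightarrow> 'm::finite mat) \<Rightarrow> (nat \<times> nat) list \<Rightarrow>
   (nat \<Rightarrow> 'm mat) \<times> (nat \<Rightarrow> nat set) \<Rightarrow> (nat \<Rightarrow> 'm mat) \<times> (nat \<Rightarrow> nat set) \<Rightarrow> bool"
  for T where
  nil: "merge_run T [] st st"
| cons: "merge_step T e st st' \<Longrightarrow> merge_run T es st' st'' \<Longrightarrow> merge_run T (e # es) st st''"

text \<open>One coordinate update of stage (4): A_i := argmax_A tr(A^T sum_{j<>i} A_j T_ji)
  (this is the block-coordinate maximiser of L in A_i).\<close>
definition coord_step :: "nat \<Rightarrow> (nat \<Rightarrow> nat \<Rightarrow> 'm::finite mat) \<Rightarrow>
    (nat \<Rightarrow> 'm mat) \<Rightarrow> (nat \<Rightarrow> 'm mat) \<Rightarrow> bool" where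
  "coord_step n T A A' \<longleftrightarrow>
     (\<exists>i\<in>{1..n}. \<exists>B \<in> argmax_perm (\<lambda>X. tr (transpose X ** (\<Sum>j\<in>{1..n} - {i}. A j ** T j i))).
        A' = A(i := B))"

end

theory Submission imports Defs begin
definition pm :: "('m::finite \<Rightarrow> 'm) \<Rightarrow> 'm mat" where
  "pm p = (\<chi> r c. if c = p r then 1 else 0)"

lemma perm_mats_pm: "perm_mats = {pm p | p. p permutes (UNIV::'m::finite set)}"
  unfolding perm_mats_def pm_def by simp

lemma delta_sum: "(\<Sum>k\<in>(UNIV::'m::finite set). (if k = a then 1 else 0) * f k) = (f a :: real)"
proof -
  have "(\<Sum>k\<in>(UNIV::'m set). (if k = a then 1 else 0) * f k) = (\<Sum>k\<in>UNIV. if k = a then f k else 0)"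
    by (rule sum.cong) auto
  also have "\<dots> = f a" by simp
  finally show ?thesis .
qed

lemma pm_mult: "pm p ** pm q = pm (q \<circ> p)"
  unfolding pm_def matrix_matrix_mult_def by (simp add: vec_eq_iff delta_sum)

lemma pm_transpose: "p permutes UNIV \<Longrightarrow> transpose (pm p) = pm (inv p)"
  unfolding pm_def transpose_def
  by (auto simp: vec_eq_iff permutes_inverses(1) permutes_inverses(2) dest: permutes_inverses)

lemma pm_id: "pm id = mat 1"
  unfolding pm_def mat_def by (simp add: vec_eq_iff)

lemma pmats_mult: "P \<in> perm_mats \<Longrightarrow> Q \<in> perm_mats \<Longrightarrow> P ** Q \<in> perm_mats"
  unfolding perm_mats_pm using pm_mult permutes_compose by blast

lemma pmats_transpose: "P \<in> perm_mats \<Longrightarrow> transpose P \<in> perm_mats"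
  unfolding perm_mats_pm using pm_transpose permutes_inv by blast

lemma pmats_tl: "P \<in> perm_mats \<Longrightarrow> transpose P ** P = mat 1"
proof -
  assume "P \<in> perm_mats"
  then obtain p where p: "p permutes UNIV" "P = pm p" unfolding perm_mats_pm by blast
  have "transpose P ** P = pm (p \<circ> inv p)" using p by (simp add: pm_transpose pm_mult)
  also have "\<dots> = mat 1" using permutes_inv_o(1)[OF p(1)] pm_id by simp
  finally show ?thesis .
qed

lemma pmats_tr: "P \<in> perm_mats \<Longrightarrow> P ** transpose P = mat 1"
proof -
  assume "P \<in> perm_mats"
  then obtain p where p: "p permutes UNIV" "P = pm p" unfolding perm_mats_pm by blast
  have "P ** transpose P = pm (inv p \<circ> p)" using p by (simp add: pm_transpose pm_mult)
  also have "\<dots> = mat 1" using permutes_inv_o(2)[OF p(1)] pm_id by simp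
  finally show ?thesis .
qed

lemma pmats_id: "mat 1 \<in> perm_mats"
  unfolding perm_mats_pm pm_id[symmetric] using permutes_id by blast

lemma cancel_tl: "P \<in> perm_mats \<Longrightarrow> X ** transpose P ** P = X"
  by (simp only: matrix_mul_assoc[symmetric] pmats_tl matrix_mul_rid)
lemma cancel_tr: "P \<in> perm_mats \<Longrightarrow> X ** P ** transpose P = X"
  by (simp only: matrix_mul_assoc[symmetric] pmats_tr matrix_mul_rid)

lemma tr_sum: "finite (S::'b set) \<Longrightarrow> tr ((X::'m::finite mat) ** sum f S) = (\<Sum>j\<in>S. tr (X ** f j))"
proof (induction S rule: finite_induct)
  case empty
  have "X ** (0::'m::finite mat) = 0" by (simp add: matrix_matrix_mult_def vec_eq_iff)
  then show ?case by (simp add: tr_def trace_def)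
next
  case (insert x F)
  then show ?case by (simp add: matrix_add_ldistrib tr_def trace_add)
qed

lemma tr_cyc: "tr (transpose Q ** (A ** T ** transpose B)) = tr (transpose (transpose A ** Q ** B) ** T)"
proof -
  have "tr (transpose Q ** (A ** T ** transpose B)) = tr ((transpose Q ** A ** T) ** transpose B)"
    by (simp add: matrix_mul_assoc)
  also have "\<dots> = tr (transpose B ** (transpose Q ** A ** T))"
    unfolding tr_def by (rule trace_mul_sym)
  also have "\<dots> = tr (transpose (transpose A ** Q ** B) ** T)"
    by (simp only: matrix_transpose_mul matrix_mul_assoc transpose_transpose)
  finally show ?thesis .
qed

lemma tr_cyc2: "tr (A ** T ** transpose B) = tr (transpose (transpose A ** B) ** T)"
proof -
  have "tr ((A ** T) ** transpose B) = tr (transpose B ** (A ** T))"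
    unfolding tr_def by (rule trace_mul_sym)
  also have "\<dots> = tr (transpose (transpose A ** B) ** T)"
    by (simp only: matrix_transpose_mul matrix_mul_assoc transpose_transpose)
  finally show ?thesis .
qed

locale alg =
  fixes n :: nat and T :: "nat \<Rightarrow> nat \<Rightarrow> 'm::finite mat" and P :: "nat \<Rightarrow> nat \<Rightarrow> 'm mat"
  assumes uniq: "\<forall>i\<in>{1..n}. \<forall>j\<in>{1..n}.
                 argmax_perm (\<lambda>Q. tr (transpose Q ** T i j)) = {P i j}"
    and consist: "\<forall>i\<in>{1..n}. \<forall>j\<in>{1..n}. \<forall>k\<in>{1..n}. P i j ** P j k = P i k"
begin

lemma Pmem: "i \<in> {1..n} \<Longrightarrow> j \<in> {1..n} \<Longrightarrow> P i j \<in> perm_mats"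
  using uniq unfolding argmax_perm_def by blast

lemma Pmax: "i \<in> {1..n} \<Longrightarrow> j \<in> {1..n} \<Longrightarrow> Q \<in> perm_mats \<Longrightarrow>
   tr (transpose Q ** T i j) \<le> tr (transpose (P i j) ** T i j)"
  using uniq unfolding argmax_perm_def by blast

lemma Puniq: "i \<in> {1..n} \<Longrightarrow> j \<in> {1..n} \<Longrightarrow> Q \<in> perm_mats \<Longrightarrow>
   tr (transpose Q ** T i j) \<ge> tr (transpose (P i j) ** T i j) \<Longrightarrow> Q = P i j"
proof -
  assume a: "i \<in> {1..n}" "j \<in> {1..n}" "Q \<in> perm_mats" "tr (transpose Q ** T i j) \<ge> tr (transpose (P i j) ** T i j)"
  have "Q \<in> argmax_perm (\<lambda>Q. tr (transpose Q ** T i j))"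
    unfolding argmax_perm_def using a Pmax[OF a(1,2)] by fastforce
  then show ?thesis using uniq a by blast
qed

lemma Pii: "i \<in> {1..n} \<Longrightarrow> P i i = mat 1"
proof -
  assume a: "i \<in> {1..n}"
  have m: "P i i \<in> perm_mats" using Pmem[OF a a] .
  have "P i i ** P i i = P i i" using consist a by blast
  then have "transpose (P i i) ** (P i i ** P i i) = mat 1" using pmats_tl[OF m] by simp
  also have "transpose (P i i) ** (P i i ** P i i) = P i i"
    by (simp only: matrix_mul_assoc pmats_tl[OF m] matrix_mul_lid)
  finally show ?thesis by simp
qed

lemma Pji: "i \<in> {1..n} \<Longrightarrow> j \<in> {1..n} \<Longrightarrow> P j i = transpose (P i j)"
proof -
  assume a: "i \<in> {1..n}" "j \<in> {1..n}"
  have "P i j ** P j i = P i i" using consist a by blast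
  then have "P i j ** P j i = mat 1" using Pii[OF a(1)] by simp
  then have "transpose (P i j) ** (P i j ** P j i) = transpose (P i j)" by simp
  moreover have "transpose (P i j) ** (P i j ** P j i) = P j i"
    by (simp only: matrix_mul_assoc pmats_tl[OF Pmem[OF a]] matrix_mul_lid)
  ultimately show ?thesis by simp
qed

definition Inv :: "(nat \<Rightarrow> 'm mat) \<Rightarrow> (nat \<Rightarrow> nat set) \<Rightarrow> bool" where
  "Inv A S \<longleftrightarrow> (\<forall>k. k \<in> S k) \<and> (\<forall>k l. l \<in> S k \<longrightarrow> S l = S k)
     \<and> (\<forall>k l. l \<in> S k \<longrightarrow> k = l \<or> (k \<in> {1..n} \<and> l \<in> {1..n}))
     \<and> (\<forall>k\<in>{1..n}. A k \<in> perm_mats)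
     \<and> (\<forall>k\<in>{1..n}. \<forall>l\<in>{1..n}. l \<in> S k \<longrightarrow> transpose (A k) ** A l = P k l)"

lemma Ph_eq:
  assumes i: "i \<in> {1..n}" and j: "j \<in> {1..n}" and Ai: "Ai \<in> perm_mats" and Aj: "Aj \<in> perm_mats"
    and Ph: "Ph \<in> argmax_perm (\<lambda>X. tr (transpose X ** (Ai ** T i j ** transpose Aj)))"
  shows "Ph = Ai ** P i j ** transpose Aj"
proof -
  have Phm: "Ph \<in> perm_mats" and le: "\<And>Q. Q \<in> perm_mats \<Longrightarrow>
      tr (transpose Q ** (Ai ** T i j ** transpose Aj)) \<le> tr (transpose Ph ** (Ai ** T i j ** transpose Aj))"
    using Ph unfolding argmax_perm_def by auto
  let ?Y = "transpose Ai ** Ph ** Aj"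
  have Ym: "?Y \<in> perm_mats" using Phm Ai Aj by (simp add: pmats_mult pmats_transpose)
  have "?Y = P i j"
  proof (rule Puniq[OF i j Ym])
    have Pm: "P i j \<in> perm_mats" using Pmem[OF i j] .
    let ?Q = "Ai ** P i j ** transpose Aj"
    have Qm: "?Q \<in> perm_mats" using Pm Ai Aj by (simp add: pmats_mult pmats_transpose)
    have e: "transpose Ai ** ?Q ** Aj = P i j"
      by (simp only: matrix_mul_assoc pmats_tl[OF Ai] cancel_tl[OF Aj] matrix_mul_lid)
    have "tr (transpose (P i j) ** T i j) = tr (transpose ?Q ** (Ai ** T i j ** transpose Aj))"
      by (simp only: tr_cyc e)
    also have "\<dots> \<le> tr (transpose Ph ** (Ai ** T i j ** transpose Aj))" using le[OF Qm] .
    also have "\<dots> = tr (transpose ?Y ** T i j)" by (simp only: tr_cyc)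
    finally show "tr (transpose (P i j) ** T i j) \<le> tr (transpose ?Y ** T i j)" .
  qed
  then have "Ai ** ?Y ** transpose Aj = Ai ** P i j ** transpose Aj" by simp
  moreover have "Ai ** ?Y ** transpose Aj = Ph"
    by (simp only: matrix_mul_assoc pmats_tr[OF Ai] cancel_tr[OF Aj] matrix_mul_lid)
  ultimately show ?thesis by simp
qed

lemma merge_ok:
  assumes inv: "Inv A S" and i: "i \<in> {1..n}" and j: "j \<in> {1..n}"
    and ms: "merge_step T (i,j) (A,S) (A',S')"
  shows "Inv A' S' \<and> (\<forall>k. S k \<subseteq> S' k) \<and> j \<in> S' i"
proof -
  from ms obtain Ph where Ph: "Ph \<in> argmax_perm (\<lambda>X. tr (transpose X ** (A i ** T i j ** transpose (A j))))"
    and A': "A' = (\<lambda>k. if k \<in> S j then Ph ** A k else A k)"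
    and S': "S' = (\<lambda>k. if k \<in> S i \<union> S j then S i \<union> S j else S k)"
    unfolding merge_step_def by auto
  have I1: "\<And>k. k \<in> S k" and I2: "\<And>k l. l \<in> S k \<Longrightarrow> S l = S k"
    and I3: "\<And>k l. l \<in> S k \<Longrightarrow> k = l \<or> (k \<in> {1..n} \<and> l \<in> {1..n})"
    and I4: "\<And>k. k \<in> {1..n} \<Longrightarrow> A k \<in> perm_mats"
    and I5: "\<And>k l. k \<in> {1..n} \<Longrightarrow> l \<in> {1..n} \<Longrightarrow> l \<in> S k \<Longrightarrow> transpose (A k) ** A l = P k l"
    using inv unfolding Inv_def by blast+
  have Ai: "A i \<in> perm_mats" using I4 i by blast
  have Aj: "A j \<in> perm_mats" using I4 j by blast
  have Phv: "Ph = A i ** P i j ** transpose (A j)" using Ph_eq[OF i j Ai Aj Ph] .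
  have Phm: "Ph \<in> perm_mats" using Ph unfolding argmax_perm_def by blast
  have mono: "\<forall>k. S k \<subseteq> S' k"
  proof
    fix k show "S k \<subseteq> S' k"
    proof (cases "k \<in> S i \<union> S j")
      case True
      then have "S k = S i \<or> S k = S j" using I2 by blast
      then show ?thesis unfolding S' using True by auto
    next
      case False then show ?thesis unfolding S' by simp
    qed
  qed
  have jin: "j \<in> S' i" unfolding S' using I1[of i] I1[of j] by auto
  have "Inv A' S'"
  proof (cases "i \<in> S j")
    case True
    have Sij: "S i = S j" using I2[OF True] .
    have "transpose (A j) ** A i = P j i" using I5[OF j i True] .
    then have "transpose (transpose (A j) ** A i) = transpose (P j i)" by simp
    then have e: "transpose (A i) ** A j = P i j" using Pji[OF i j] by (simp add: matrix_transpose_mul)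
    have "Ph = A i ** (transpose (A i) ** A j) ** transpose (A j)" using Phv e by simp
    also have "\<dots> = mat 1"
      by (simp only: matrix_mul_assoc pmats_tr[OF Ai] cancel_tr[OF Aj] matrix_mul_lid pmats_tr[OF Aj])
    finally have Ph1: "Ph = mat 1" .
    have "A' = A" unfolding A' Ph1 by auto
    moreover have "S' = S"
    proof
      fix k show "S' k = S k"
      proof (cases "k \<in> S j")
        case True then show ?thesis unfolding S' using Sij I2[OF True] by simp
      next
        case False then show ?thesis unfolding S' using Sij by simp
      qed
    qed
    ultimately show ?thesis using inv by simp
  next
    case False
    have disj: "S i \<inter> S j = {}"
    proof (rule ccontr)
      assume "S i \<inter> S j \<noteq> {}"
      then obtain x where "x \<in> S i" "x \<in> S j" by blast
      then have "S i = S j" using I2[of x i] I2[of x j] by simp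
      then show False using False I1[of i] by simp
    qed
    have UI: "\<And>x. x \<in> S i \<union> S j \<Longrightarrow> x \<in> {1..n}" using I3 i j by blast
    have cross: "\<And>k l. k \<in> S i \<Longrightarrow> l \<in> S j \<Longrightarrow> transpose (A k) ** (Ph ** A l) = P k l"
    proof -
      fix k l assume k: "k \<in> S i" and l: "l \<in> S j"
      have kI: "k \<in> {1..n}" and lI: "l \<in> {1..n}" using UI k l by auto
      have "i \<in> S k" using I2[OF k] I1[of i] by simp
      then have e1: "transpose (A k) ** A i = P k i" using I5[OF kI i] by blast
      have e2: "transpose (A j) ** A l = P j l" using I5[OF j lI l] .
      have "transpose (A k) ** (Ph ** A l) = (transpose (A k) ** A i) ** P i j ** (transpose (A j) ** A l)"
        by (simp add: Phv matrix_mul_assoc)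
      also have "\<dots> = P k l" using e1 e2 consist kI lI i j by simp
      finally show "transpose (A k) ** (Ph ** A l) = P k l" .
    qed
    have A'i: "\<And>k. k \<in> S i \<Longrightarrow> A' k = A k" using disj unfolding A' by auto
    have A'j: "\<And>k. k \<in> S j \<Longrightarrow> A' k = Ph ** A k" unfolding A' by auto
    have A'o: "\<And>k. k \<notin> S i \<union> S j \<Longrightarrow> A' k = A k" unfolding A' by auto
    have out: "\<And>k l. k \<notin> S i \<union> S j \<Longrightarrow> l \<in> S k \<Longrightarrow> l \<notin> S i \<union> S j"
    proof
      fix k l assume k: "k \<notin> S i \<union> S j" and l: "l \<in> S k" and "l \<in> S i \<union> S j"
      then have "S l = S i \<or> S l = S j" using I2 by blast
      then show False using I2[OF l] I1[of k] k by auto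
    qed
    have P1: "\<forall>k. k \<in> S' k" unfolding S' using I1 by auto
    have P2: "\<forall>k l. l \<in> S' k \<longrightarrow> S' l = S' k"
    proof (intro allI impI)
      fix k l assume l: "l \<in> S' k"
      show "S' l = S' k"
      proof (cases "k \<in> S i \<union> S j")
        case True then show ?thesis using l unfolding S' by auto
      next
        case False
        then have "l \<in> S k" using l unfolding S' by simp
        then show ?thesis using out[OF False] I2 False unfolding S' by auto
      qed
    qed
    have P3: "\<forall>k l. l \<in> S' k \<longrightarrow> k = l \<or> (k \<in> {1..n} \<and> l \<in> {1..n})"
    proof (intro allI impI)
      fix k l assume l: "l \<in> S' k"
      show "k = l \<or> (k \<in> {1..n} \<and> l \<in> {1..n})"
      proof (cases "k \<in> S i \<union> S j")
        case True then show ?thesis using l UI unfolding S' by auto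
      next
        case False
        then have "l \<in> S k" using l unfolding S' by simp
        then show ?thesis using I3 by blast
      qed
    qed
    have P4: "\<forall>k\<in>{1..n}. A' k \<in> perm_mats"
      unfolding A' using I4 Phm pmats_mult by (simp add: pmats_mult)
    have P5: "\<forall>k\<in>{1..n}. \<forall>l\<in>{1..n}. l \<in> S' k \<longrightarrow> transpose (A' k) ** A' l = P k l"
    proof (intro ballI impI)
      fix k l assume kI: "k \<in> {1..n}" and lI: "l \<in> {1..n}" and l: "l \<in> S' k"
      show "transpose (A' k) ** A' l = P k l"
      proof (cases "k \<in> S i \<union> S j")
        case False
        then have lk: "l \<in> S k" using l unfolding S' by simp
        then have "l \<notin> S i \<union> S j" using out[OF False] by blast
        then show ?thesis using A'o False I5[OF kI lI lk] by simp
      next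
        case True
        then have lU: "l \<in> S i \<union> S j" using l unfolding S' by simp
        show ?thesis
        proof (cases "k \<in> S i")
          case ki: True
          show ?thesis
          proof (cases "l \<in> S i")
            case True
            then have "l \<in> S k" using I2[OF ki] by simp
            then show ?thesis using A'i ki True I5[OF kI lI] by simp
          next
            case False
            then have lj: "l \<in> S j" using lU by simp
            show ?thesis using A'i[OF ki] A'j[OF lj] cross[OF ki lj] by simp
          qed
        next
          case kni: False
          then have kj: "k \<in> S j" using True by simp
          show ?thesis
          proof (cases "l \<in> S i")
            case li: True
            have "transpose (A l) ** (Ph ** A k) = P l k" using cross[OF li kj] .
            then have "transpose (transpose (A l) ** (Ph ** A k)) = transpose (P l k)" by simp
            then have "transpose (Ph ** A k) ** A l = P k l"
              using Pji[OF lI kI] by (simp add: matrix_transpose_mul)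
            then show ?thesis using A'i[OF li] A'j[OF kj] by simp
          next
            case False
            then have lj: "l \<in> S j" using lU by simp
            then have "l \<in> S k" using I2[OF kj] by simp
            then have e: "transpose (A k) ** A l = P k l" using I5[OF kI lI] by blast
            have "transpose (Ph ** A k) ** (Ph ** A l) = transpose (A k) ** A l"
              by (simp only: matrix_transpose_mul matrix_mul_assoc cancel_tl[OF Phm])
            then show ?thesis using A'j[OF kj] A'j[OF lj] e by simp
          qed
        qed
      qed
    qed
    show ?thesis unfolding Inv_def using P1 P2 P3 P4 P5 by blast
  qed
  then show ?thesis using mono jin by blast
qed

lemma run_ok:
  "merge_run T es st st' \<Longrightarrow> Inv (fst st) (snd st) \<Longrightarrow> (\<forall>e\<in>set es. fst e \<in> {1..n} \<and> snd e \<in> {1..n}) \<Longrightarrow>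
   Inv (fst st') (snd st') \<and> (\<forall>k. snd st k \<subseteq> snd st' k) \<and> (\<forall>e\<in>set es. snd e \<in> snd st' (fst e))"
proof (induction rule: merge_run.induct)
  case (nil st)
  then show ?case by simp
next
  case (cons e st st' es st'')
  obtain i j where e: "e = (i,j)" by (cases e)
  obtain A S where st: "st = (A,S)" by (cases st)
  obtain A' S' where st': "st' = (A',S')" by (cases st')
  have ij: "i \<in> {1..n}" "j \<in> {1..n}" using cons.prems(2) e by auto
  have m: "Inv A' S' \<and> (\<forall>k. S k \<subseteq> S' k) \<and> j \<in> S' i"
    using merge_ok[of A S i j A' S'] cons.prems(1) cons.hyps(1) ij e st st' by simp
  have ih: "Inv (fst st'') (snd st'') \<and> (\<forall>k. snd st' k \<subseteq> snd st'' k) \<and> (\<forall>e\<in>set es. snd e \<in> snd st'' (fst e))"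
    using cons.IH m st' cons.prems(2) by simp
  have mono: "\<forall>k. S k \<subseteq> snd st'' k" using ih m st' by force
  have "j \<in> snd st'' i" using ih m st' by force
  then show ?case using ih mono st e by simp
qed

definition J :: "(nat \<Rightarrow> 'm mat) \<Rightarrow> bool" where
  "J A \<longleftrightarrow> (\<forall>k\<in>{1..n}. A k \<in> perm_mats) \<and> (\<forall>k\<in>{1..n}. \<forall>l\<in>{1..n}. transpose (A k) ** A l = P k l)"

lemma coord_ok:
  assumes JA: "J A" and cs: "coord_step n T A A'"
  shows "J A'"
proof -
  from cs obtain i B where i: "i \<in> {1..n}"
    and B: "B \<in> argmax_perm (\<lambda>X. tr (transpose X ** (\<Sum>j\<in>{1..n} - {i}. A j ** T j i)))"
    and A': "A' = A(i := B)"
    unfolding coord_step_def by blast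
  have Am: "\<And>k. k \<in> {1..n} \<Longrightarrow> A k \<in> perm_mats"
    and Ae: "\<And>k l. k \<in> {1..n} \<Longrightarrow> l \<in> {1..n} \<Longrightarrow> transpose (A k) ** A l = P k l"
    using JA unfolding J_def by blast+
  have Bm: "B \<in> perm_mats" using B unfolding argmax_perm_def by blast
  let ?K = "{1..n} - {i}"
  define g where "g X j = tr (transpose (transpose (A j) ** X) ** T j i)" for X j
  have h: "\<And>X. tr (transpose X ** (\<Sum>j\<in>?K. A j ** T j i)) = (\<Sum>j\<in>?K. g X j)"
  proof -
    fix X :: "'m mat"
    have "tr (transpose X ** (\<Sum>j\<in>?K. A j ** T j i)) = (\<Sum>j\<in>?K. tr (transpose X ** (A j ** T j i)))"
      by (rule tr_sum) simp
    also have "\<dots> = (\<Sum>j\<in>?K. g X j)"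
      unfolding g_def by (simp add: matrix_transpose_mul matrix_mul_assoc)
    finally show "tr (transpose X ** (\<Sum>j\<in>?K. A j ** T j i)) = (\<Sum>j\<in>?K. g X j)" .
  qed
  have gAi: "\<And>j. j \<in> ?K \<Longrightarrow> g (A i) j = tr (transpose (P j i) ** T j i)"
    unfolding g_def using Ae i by simp
  have gB: "\<And>j. j \<in> ?K \<Longrightarrow> g B j \<le> tr (transpose (P j i) ** T j i)"
  proof -
    fix j assume "j \<in> ?K"
    then have jI: "j \<in> {1..n}" by simp
    have "transpose (A j) ** B \<in> perm_mats" using Am[OF jI] Bm by (simp add: pmats_mult pmats_transpose)
    then show "g B j \<le> tr (transpose (P j i) ** T j i)" unfolding g_def by (rule Pmax[OF jI i])
  qed
  have "(\<Sum>j\<in>?K. g (A i) j) \<le> (\<Sum>j\<in>?K. g B j)"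
    using B Am[OF i] h unfolding argmax_perm_def by auto
  then have "(\<Sum>j\<in>?K. g (A i) j - g B j) \<le> 0" by (simp add: sum_subtractf)
  moreover have nn: "\<forall>j\<in>?K. 0 \<le> g (A i) j - g B j" using gAi gB by simp
  ultimately have "(\<Sum>j\<in>?K. g (A i) j - g B j) = 0" using sum_nonneg[of ?K "\<lambda>j. g (A i) j - g B j"] nn by (simp add: ball_def)
  then have z: "\<forall>j\<in>?K. g (A i) j - g B j = 0"
    using sum_nonneg_eq_0_iff[of ?K "\<lambda>j. g (A i) j - g B j"] nn by blast
  have eB: "\<And>j. j \<in> ?K \<Longrightarrow> transpose (A j) ** B = P j i"
  proof -
    fix j assume j: "j \<in> ?K"
    have jI: "j \<in> {1..n}" using j by simp
    have d: "g (A i) j - g B j = 0" using z j by blast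
    have "g B j = tr (transpose (P j i) ** T j i)" using d gAi[OF j] by linarith
    then have ge: "tr (transpose (P j i) ** T j i) \<le> tr (transpose (transpose (A j) ** B) ** T j i)"
      unfolding g_def by simp
    have "transpose (A j) ** B \<in> perm_mats" using Am[OF jI] Bm by (simp add: pmats_mult pmats_transpose)
    then show "transpose (A j) ** B = P j i" using Puniq[OF jI i] ge by blast
  qed
  have eB2: "\<And>j. j \<in> ?K \<Longrightarrow> transpose B ** A j = P i j"
  proof -
    fix j assume j: "j \<in> ?K"
    have jI: "j \<in> {1..n}" using j by simp
    have "transpose (transpose (A j) ** B) = transpose (P j i)" using eB[OF j] by simp
    then show "transpose B ** A j = P i j" using Pji[OF i jI] by (simp add: matrix_transpose_mul)
  qed
  show ?thesis unfolding J_def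
  proof (intro conjI ballI)
    fix k assume "k \<in> {1..n}" then show "A' k \<in> perm_mats" using Am Bm A' by simp
  next
    fix k l assume k: "k \<in> {1..n}" and l: "l \<in> {1..n}"
    show "transpose (A' k) ** A' l = P k l"
    proof (cases "k = i")
      case True
      show ?thesis
      proof (cases "l = i")
        case True then show ?thesis using \<open>k = i\<close> A' pmats_tl[OF Bm] Pii[OF i] by simp
      next
        case False then show ?thesis using \<open>k = i\<close> A' eB2 l by simp
      qed
    next
      case False
      show ?thesis
      proof (cases "l = i")
        case True then show ?thesis using False A' eB k by simp
      next
        case lF: False then show ?thesis using False A' Ae k l by simp
      qed
    qed
  qed
qed

end

theorem theorem1:
  fixes n :: nat
    and T :: "nat \<Rightarrow> nat \<Rightarrow> 'm::finite mat"
    and P :: "nat \<Rightarrow> nat \<Rightarrow> 'm mat"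
  assumes n2: "n \<ge> 2"
    and Tsym: "\<forall>i\<in>{1..n}. \<forall>j\<in>{1..n}. T i j = transpose (T j i)"
    and uniq: "\<forall>i\<in>{1..n}. \<forall>j\<in>{1..n}.
                 argmax_perm (\<lambda>Q. tr (transpose Q ** T i j)) = {P i j}"
    and consist: "\<forall>i\<in>{1..n}. \<forall>j\<in>{1..n}. \<forall>k\<in>{1..n}. P i j ** P j k = P i k"
    and mst: "max_spanning_tree n T E"
    and ord: "edge_order E es"
    and init: "\<forall>i\<in>{1..n}. A0 i \<in> perm_mats"
    and stage3: "merge_run T es (A0, \<lambda>i. {i}) (A1, S1)"
    and stage4: "(coord_step n T)\<^sup>*\<^sup>* A1 A"
  shows "(\<forall>i\<in>{1..n}. A i \<in> perm_mats) \<and>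
         (\<forall>B. (\<forall>i\<in>{1..n}. B i \<in> perm_mats) \<longrightarrow> Lobj n T B \<le> Lobj n T A)"
proof -
  interpret alg n T P using uniq consist by unfold_locales
  have sp: "spanning_tree n E" using mst unfolding max_spanning_tree_def by blast
  have EC: "E \<subseteq> complete_edges n" and conn: "\<forall>u\<in>{1..n}. \<forall>v\<in>{1..n}. (u,v) \<in> (sym_edges E)\<^sup>*"
    using sp unfolding spanning_tree_def by blast+
  have setE: "norm_edge ` set es = E" using ord unfolding edge_order_def by simp
  have ends: "\<forall>e\<in>set es. fst e \<in> {1..n} \<and> snd e \<in> {1..n}"
  proof
    fix e assume "e \<in> set es"
    then have "norm_edge e \<in> complete_edges n" using setE EC by blast
    then show "fst e \<in> {1..n} \<and> snd e \<in> {1..n}"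
      unfolding norm_edge_def complete_edges_def by (auto split: if_splits)
  qed
  have inv0: "Inv A0 (\<lambda>i. {i})"
    unfolding Inv_def using init Pii pmats_tl by auto
  have r: "Inv (fst (A1,S1)) (snd (A1,S1)) \<and> (\<forall>k. snd (A0, \<lambda>i. {i}) k \<subseteq> snd (A1,S1) k) \<and> (\<forall>e\<in>set es. snd e \<in> snd (A1,S1) (fst e))"
    using run_ok[OF stage3] inv0 ends by simp
  have inv1: "Inv A1 S1" and cov: "\<forall>e\<in>set es. snd e \<in> S1 (fst e)" using r by auto
  have I1: "\<And>k. k \<in> S1 k" and I2: "\<And>k l. l \<in> S1 k \<Longrightarrow> S1 l = S1 k"
    and I4: "\<And>k. k \<in> {1..n} \<Longrightarrow> A1 k \<in> perm_mats"
    and I5: "\<And>k l. k \<in> {1..n} \<Longrightarrow> l \<in> {1..n} \<Longrightarrow> l \<in> S1 k \<Longrightarrow> transpose (A1 k) ** A1 l = P k l"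
    using inv1 unfolding Inv_def by blast+
  have symS: "\<And>a b. b \<in> S1 a \<Longrightarrow> a \<in> S1 b"
  proof -
    fix a b assume h: "b \<in> S1 a"
    show "a \<in> S1 b" using I2[OF h] I1[of a] by simp
  qed
  have edge: "\<And>a b. (a,b) \<in> sym_edges E \<Longrightarrow> b \<in> S1 a"
  proof -
    have d: "\<And>a b. (a,b) \<in> E \<Longrightarrow> b \<in> S1 a \<and> a \<in> S1 b"
    proof -
      fix a b assume "(a,b) \<in> E"
      then have "(a,b) \<in> norm_edge ` set es" using setE by simp
      then obtain e where e: "e \<in> set es" "norm_edge e = (a,b)" by (auto simp del: norm_edge_def)
      obtain x y where xy: "e = (x,y)" by (cases e)
      have "y \<in> S1 x" using cov e xy by auto
      moreover have "(x,y) = (a,b) \<or> (y,x) = (a,b)" using e(2) xy unfolding norm_edge_def by (auto split: if_splits)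
      ultimately show "b \<in> S1 a \<and> a \<in> S1 b" using symS by blast
    qed
    fix a b assume "(a,b) \<in> sym_edges E"
    then show "b \<in> S1 a" using d unfolding sym_edges_def by blast
  qed
  have allS: "\<And>u v. (u,v) \<in> (sym_edges E)\<^sup>* \<Longrightarrow> v \<in> S1 u"
  proof -
    fix u v assume "(u,v) \<in> (sym_edges E)\<^sup>*"
    then show "v \<in> S1 u"
    proof (induction rule: rtrancl_induct)
      case base then show ?case using I1 by simp
      case (step y z)
      then show ?case using edge[OF step(2)] I2[OF step(3)] by simp
    qed
  qed
  have J1: "J A1" unfolding J_def using I4 I5 allS conn by blast
  have JA: "J A" using stage4 J1
    by (induction rule: rtranclp_induct) (auto intro: coord_ok)
  have Am: "\<forall>i\<in>{1..n}. A i \<in> perm_mats" and Ae: "\<forall>k\<in>{1..n}. \<forall>l\<in>{1..n}. transpose (A k) ** A l = P k l"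
    using JA unfolding J_def by blast+
  have opt: "Lobj n T B \<le> Lobj n T A" if B: "\<forall>i\<in>{1..n}. B i \<in> perm_mats" for B
    unfolding Lobj_def
  proof (rule sum_mono, rule sum_mono)
    fix i j assume i: "i \<in> {1..n}" and j: "j \<in> {1..n}"
    have "tr (B i ** T i j ** transpose (B j)) = tr (transpose (transpose (B i) ** B j) ** T i j)" by (rule tr_cyc2)
    also have "\<dots> \<le> tr (transpose (P i j) ** T i j)"
    proof (rule Pmax[OF i j])
      show "transpose (B i) ** B j \<in> perm_mats" using B i j by (simp add: pmats_mult pmats_transpose)
    qed
    also have "\<dots> = tr (A i ** T i j ** transpose (A j))" using Ae i j by (simp only: tr_cyc2)
    finally show "tr (B i ** T i j ** transpose (B j)) \<le> tr (A i ** T i j ** transpose (A j))" .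
  qed
  show ?thesis using Am opt by blast
qed

end
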